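(* For real $m>0$ and integer $n\ge m$ there exist positive constants $C_{\mathrm{scale}}$ and $C_{\mathrm{maxdensity}}$, depending only on $m$ and $n$, such that for every integer $k$ with $m<k\le n$, every cube $Q\subset\mathbb{R}^k$ (with sides parallel to the coordinate axes), and every $X\subset\operatorname{int}Q$ with $\mathrm{HC}_m(X)<C_{\mathrm{maxdensity}}\,\mathrm{HC}_m(Q)$, there is a point $O\in\operatorname{int}Q\setminus X$ such that $$\mathrm{HC}_m(\phi_O(X))\le C_{\mathrm{scale}}\,\mathrm{HC}_m(X),$$ where $\phi_O:Q\setminus\{O\}\to\partial Q$ is the radial projection in $Q$ with center $O$.
   Context: $\mathbb{R}^k$ carries the $\ell^\infty$ metric, and $\mathrm{HC}_m(A)$ is the $m$-dimensional Hausdorff content: the infimum of $\sum_i r_i^m$ over coverings of $A$ by metric balls with radii $r_i$. The radial projection $\phi_O$ sends $y\in Q\setminus\{O\}$ to the unique point where the ray from $O$ through $y$ meets $\partial Q$. *)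

theory Defs
  imports "HOL-Analysis.Analysis"
begin

text \<open>Points of R^k are represented as functions nat => real vanishing at
coordinates >= k (k varies inside the statement).\<close>
definition Rk :: "nat \<Rightarrow> (nat \<Rightarrow> real) set" where
  "Rk k = {x. \<forall>i\<ge>k. x i = 0}"

definition linf_cball :: "nat \<Rightarrow> (nat \<Rightarrow> real) \<Rightarrow> real \<Rightarrow> (nat \<Rightarrow> real) set" where
  "linf_cball k c r = {x \<in> Rk k. \<forall>i<k. \<bar>x i - c i\<bar> \<le> r}"

definition HC :: "nat \<Rightarrow> real \<Rightarrow> (nat \<Rightarrow> real) set \<Rightarrow> ennreal" where
  "HC k m A = (INF p \<in> {(c, r). (\<forall>i. c i \<in> Rk k \<and> r i \<ge> 0) \<and>
        A \<subseteq> (\<Union>i. linf_cball k (c i) (r i))}.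
      (\<Sum>i. ennreal ((snd p i) powr m)))"

definition cube :: "nat \<Rightarrow> (nat \<Rightarrow> real) \<Rightarrow> real \<Rightarrow> (nat \<Rightarrow> real) set" where
  "cube k c s = {x \<in> Rk k. \<forall>i<k. \<bar>x i - c i\<bar> \<le> s}"

definition cube_int :: "nat \<Rightarrow> (nat \<Rightarrow> real) \<Rightarrow> real \<Rightarrow> (nat \<Rightarrow> real) set" where
  "cube_int k c s = {x \<in> Rk k. \<forall>i<k. \<bar>x i - c i\<bar> < s}"

definition cube_bd :: "nat \<Rightarrow> (nat \<Rightarrow> real) \<Rightarrow> real \<Rightarrow> (nat \<Rightarrow> real) set" where
  "cube_bd k c s = cube k c s - cube_int k c s"

definition radproj :: "nat \<Rightarrow> (nat \<Rightarrow> real) \<Rightarrow> real \<Rightarrow> (nat \<Rightarrow> real) \<Rightarrow> (nat \<Rightarrow> real) \<Rightarrow> (nat \<Rightarrow> real)" where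
  "radproj k c s p y = (THE z. z \<in> cube_bd k c s \<and> (\<exists>t\<ge>0. z = (\<lambda>i. p i + t * (y i - p i))))"

end

theory Submission
  imports Defs
begin


definition gf :: "real \<Rightarrow> real \<Rightarrow> real \<Rightarrow> real" where
  "gf a b v = (if 0 \<le> v then v / a else - v / b)"

definition gg :: "(nat \<Rightarrow> real) \<Rightarrow> real \<Rightarrow> (nat \<Rightarrow> real) \<Rightarrow> nat \<Rightarrow> real \<Rightarrow> real" where
  "gg c s p j v = gf (c j + s - p j) (p j - c j + s) v"

definition NN :: "nat \<Rightarrow> (nat \<Rightarrow> real) \<Rightarrow> real \<Rightarrow> (nat \<Rightarrow> real) \<Rightarrow> (nat \<Rightarrow> real) \<Rightarrow> real" where
  "NN k c s p u = Max ((\<lambda>j. gg c s p j (u j)) ` {..<k})"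

lemma gf_nonneg: "a > 0 \<Longrightarrow> b > 0 \<Longrightarrow> 0 \<le> gf a b v"
  by (auto simp: gf_def divide_nonpos_pos)

lemma gf_pos: "a > 0 \<Longrightarrow> b > 0 \<Longrightarrow> v \<noteq> 0 \<Longrightarrow> 0 < gf a b v"
  by (auto simp: gf_def divide_neg_pos)

lemma gf_scale: "t \<ge> 0 \<Longrightarrow> a > 0 \<Longrightarrow> b > 0 \<Longrightarrow> gf a b (t * v) = t * gf a b v"
  by (cases "t = 0") (auto simp: gf_def zero_le_mult_iff)

lemma gf_lower:
  assumes "0 < a" "0 < b" "a \<le> B" "b \<le> B"
  shows "\<bar>v\<bar> \<le> B * gf a b v"
proof (cases "0 \<le> v")
  case True
  have "v \<le> B * (v / a)" using assms True
    by (simp add: field_simps mult_right_mono)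
  then show ?thesis using True by (simp add: gf_def)
next
  case False
  have "- v \<le> B * (- v / b)" using assms False
    by (simp add: field_simps mult_right_mono)
  then show ?thesis using False by (simp add: gf_def)
qed

lemma gf_lip:
  assumes "0 < a" "0 < b" "L \<le> a" "L \<le> b" "0 < L"
  shows "gf a b v \<le> gf a b v' + \<bar>v - v'\<bar> / L"
proof -
  have ia: "1/a \<le> 1/L" and ib: "1/b \<le> 1/L" using assms by (auto simp: field_simps)
  show ?thesis
  proof (cases "0 \<le> v")
    case v: True
    show ?thesis
    proof (cases "0 \<le> v'")
      case True
      have "v / a - v' / a \<le> \<bar>v - v'\<bar> / a" by (simp add: diff_divide_distrib[symmetric] divide_right_mono assms(1) less_imp_le)
      also have "\<dots> \<le> \<bar>v - v'\<bar> / L" using assms by (simp add: frac_le)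
      finally show ?thesis using v True by (simp add: gf_def)
    next
      case False
      have "v / a \<le> \<bar>v - v'\<bar> / L" using assms v False
        by (smt (verit) frac_le)
      moreover have "0 \<le> - v' / b" using False assms by (simp add: divide_nonpos_pos)
      ultimately show ?thesis using v False by (simp add: gf_def)
    qed
  next
    case v: False
    show ?thesis
    proof (cases "0 \<le> v'")
      case True
      have "-v / b \<le> \<bar>v - v'\<bar> / L" using assms v True
        by (smt (verit) frac_le)
      moreover have "0 \<le> v' / a" using True assms by simp
      ultimately show ?thesis using v True by (simp add: gf_def)
    next
      case False
      have "-v / b - (- v' / b) \<le> \<bar>v - v'\<bar> / b" by (simp add: diff_divide_distrib[symmetric] divide_right_mono assms(2) less_imp_le)
      also have "\<dots> \<le> \<bar>v - v'\<bar> / L" using assms by (simp add: frac_le)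
      finally show ?thesis using v False by (simp add: gf_def)
    qed
  qed
qed

lemma gf_cube:
  assumes "\<bar>p - c\<bar> < s"
  shows "(\<bar>p + v - c\<bar> \<le> s) \<longleftrightarrow> gf (c + s - p) (p - c + s) v \<le> 1"
    and "(\<bar>p + v - c\<bar> < s) \<longleftrightarrow> gf (c + s - p) (p - c + s) v < 1"
  using assms by (auto simp: gf_def field_simps abs_if split: if_splits)


lemma NN_ge: "j < k \<Longrightarrow> gg c s p j (u j) \<le> NN k c s p u"
  unfolding NN_def by (rule Max_ge) auto

lemma NN_le: "k > 0 \<Longrightarrow> (\<And>j. j < k \<Longrightarrow> gg c s p j (u j) \<le> B) \<Longrightarrow> NN k c s p u \<le> B"
  unfolding NN_def by (subst Max_le_iff) auto

lemma NN_attain: "k > 0 \<Longrightarrow> \<exists>j<k. NN k c s p u = gg c s p j (u j)"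
proof -
  assume "k > 0"
  then have "NN k c s p u \<in> (\<lambda>j. gg c s p j (u j)) ` {..<k}"
    unfolding NN_def by (intro Max_in) auto
  then show ?thesis by auto
qed

lemma cube_int_ab:
  assumes "p \<in> cube_int k c s" "j < k"
  shows "0 < c j + s - p j" "0 < p j - c j + s" "\<bar>p j - c j\<bar> < s"
  using assms by (auto simp: cube_int_def)

lemma gg_cube:
  assumes "p \<in> cube_int k c s" "j < k"
  shows "(\<bar>p j + v - c j\<bar> \<le> s) \<longleftrightarrow> gg c s p j v \<le> 1"
    and "(\<bar>p j + v - c j\<bar> < s) \<longleftrightarrow> gg c s p j v < 1"
  using gf_cube[OF cube_int_ab(3)[OF assms]] unfolding gg_def by auto

lemma gg_scale: "p \<in> cube_int k c s \<Longrightarrow> j < k \<Longrightarrow> t \<ge> 0 \<Longrightarrow> gg c s p j (t * v) = t * gg c s p j v"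
  unfolding gg_def using cube_int_ab by (intro gf_scale) auto

lemma gg_nonneg: "p \<in> cube_int k c s \<Longrightarrow> j < k \<Longrightarrow> 0 \<le> gg c s p j v"
  unfolding gg_def using cube_int_ab by (intro gf_nonneg) auto

lemma gg_pos: "p \<in> cube_int k c s \<Longrightarrow> j < k \<Longrightarrow> v \<noteq> 0 \<Longrightarrow> 0 < gg c s p j v"
  unfolding gg_def using cube_int_ab by (intro gf_pos) auto

lemma radproj_formula:
  assumes k: "k > 0" and p: "p \<in> cube_int k c s" and y: "y \<in> Rk k" and jy: "j0 < k" "y j0 \<noteq> p j0"
  shows "radproj k c s p y = (\<lambda>i. p i + (1 / NN k c s p (\<lambda>i. y i - p i)) * (y i - p i))"
proof -
  define u where "u = (\<lambda>i. y i - p i)"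
  define n where "n = NN k c s p u"
  have pR: "p \<in> Rk k" using p by (simp add: cube_int_def)
  have "0 < gg c s p j0 (u j0)" using gg_pos[OF p jy(1)] jy by (simp add: u_def)
  also have "\<dots> \<le> n" unfolding n_def by (rule NN_ge[OF jy(1)])
  finally have npos: "0 < n" .
  define z where "z = (\<lambda>i. p i + (1 / n) * u i)"
  have key: "(w \<in> cube_bd k c s) \<longleftrightarrow> t * n = 1" if w: "w = (\<lambda>i. p i + t * u i)" "t \<ge> 0" for w t
  proof -
    have wR: "w \<in> Rk k" using pR y w by (simp add: Rk_def u_def)
    have c1: "w \<in> cube k c s \<longleftrightarrow> (\<forall>j<k. t * gg c s p j (u j) \<le> 1)"
      using wR gg_cube(1)[OF p] gg_scale[OF p _ w(2)] w by (auto simp: cube_def)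
    have c2: "w \<in> cube_int k c s \<longleftrightarrow> (\<forall>j<k. t * gg c s p j (u j) < 1)"
      using wR gg_cube(2)[OF p] gg_scale[OF p _ w(2)] w by (auto simp: cube_int_def)
    have "(\<forall>j<k. t * gg c s p j (u j) \<le> 1) \<longleftrightarrow> t * n \<le> 1"
    proof
      assume H: "\<forall>j<k. t * gg c s p j (u j) \<le> 1"
      obtain j where "j < k" "n = gg c s p j (u j)" using NN_attain[OF k] n_def by blast
      then show "t * n \<le> 1" using H by auto
    next
      assume "t * n \<le> 1"
      then show "\<forall>j<k. t * gg c s p j (u j) \<le> 1"
        using NN_ge[of _ k c s p u] w(2) n_def by (meson mult_left_mono order_trans)
    qed
    moreover have "(\<forall>j<k. t * gg c s p j (u j) < 1) \<longleftrightarrow> t * n < 1"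
    proof
      assume H: "\<forall>j<k. t * gg c s p j (u j) < 1"
      obtain j where "j < k" "n = gg c s p j (u j)" using NN_attain[OF k] n_def by blast
      then show "t * n < 1" using H by auto
    next
      assume "t * n < 1"
      then show "\<forall>j<k. t * gg c s p j (u j) < 1"
        using NN_ge[of _ k c s p u] w(2) n_def by (meson mult_left_mono order_le_less_trans)
    qed
    ultimately show ?thesis using c1 c2 by (auto simp: cube_bd_def)
  qed
  have "radproj k c s p y = z"
    unfolding radproj_def
  proof (rule the_equality)
    show "z \<in> cube_bd k c s \<and> (\<exists>t\<ge>0. z = (\<lambda>i. p i + t * (y i - p i)))"
    proof
      show "z \<in> cube_bd k c s" using key[of z "1/n"] npos by (simp add: z_def)
      show "\<exists>t\<ge>0. z = (\<lambda>i. p i + t * (y i - p i))"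
        using npos by (intro exI[of _ "1/n"]) (simp add: z_def u_def)
    qed
  next
    fix w assume "w \<in> cube_bd k c s \<and> (\<exists>t\<ge>0. w = (\<lambda>i. p i + t * (y i - p i)))"
    then obtain t where t: "t \<ge> 0" "w = (\<lambda>i. p i + t * u i)" "w \<in> cube_bd k c s"
      by (auto simp: u_def)
    then have "t * n = 1" using key by blast
    then have "t = 1 / n" using npos by (simp add: field_simps)
    then show "w = z" using t by (simp add: z_def)
  qed
  then show ?thesis by (simp add: z_def n_def u_def)
qed


lemma mid_cube_int: "s > 0 \<Longrightarrow> p \<in> Rk k \<Longrightarrow> (\<forall>j<k. \<bar>p j - c j\<bar> \<le> s / 2) \<Longrightarrow> p \<in> cube_int k c s"
  by (force simp: cube_int_def)

lemma mid_ab: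
  fixes p c :: "nat \<Rightarrow> real"
  assumes "s > 0" "\<bar>p j - c j\<bar> \<le> s / 2"
  shows "s / 2 \<le> c j + s - p j" "s / 2 \<le> p j - c j + s" "c j + s - p j \<le> 3 * s / 2" "p j - c j + s \<le> 3 * s / 2"
proof -
  have "- (s / 2) \<le> p j - c j" "p j - c j \<le> s / 2" using assms(2) by linarith+
  then show "s / 2 \<le> c j + s - p j" "s / 2 \<le> p j - c j + s" "c j + s - p j \<le> 3 * s / 2" "p j - c j + s \<le> 3 * s / 2"
    by linarith+
qed

lemma gg_lower_mid:
  assumes "s > 0" "\<bar>p j - c j\<bar> \<le> s / 2"
  shows "\<bar>v\<bar> \<le> (3 * s / 2) * gg c s p j v"
  unfolding gg_def using mid_ab[of s p j c] assms by (intro gf_lower) auto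

lemma gg_lip_mid:
  assumes "s > 0" "\<bar>p j - c j\<bar> \<le> s / 2"
  shows "gg c s p j v \<le> gg c s p j v' + \<bar>v - v'\<bar> / (s / 2)"
  unfolding gg_def using mid_ab[of s p j c] assms by (intro gf_lip) auto

lemma NN_lip_mid:
  assumes k: "k > 0" and s: "s > 0" and mid: "\<forall>j<k. \<bar>p j - c j\<bar> \<le> s / 2"
    and D: "\<forall>i<k. \<bar>u i - u' i\<bar> \<le> D"
  shows "NN k c s p u \<le> NN k c s p u' + D / (s / 2)"
proof (rule NN_le[OF k])
  fix j assume j: "j < k"
  have "gg c s p j (u j) \<le> gg c s p j (u' j) + \<bar>u j - u' j\<bar> / (s / 2)"
    using gg_lip_mid[OF s] mid j by blast
  also have "\<dots> \<le> NN k c s p u' + D / (s / 2)"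
    using NN_ge[OF j, of c s p u'] D j s by (intro add_mono divide_right_mono) auto
  finally show "gg c s p j (u j) \<le> NN k c s p u' + D / (s / 2)" .
qed

lemma radproj_lip:
  assumes k: "k > 0" and s: "s > 0" and pR: "p \<in> Rk k" and mid: "\<forall>j<k. \<bar>p j - c j\<bar> \<le> s / 2"
    and y: "y \<in> Rk k" and y': "y' \<in> Rk k"
    and j0: "j0 < k" and L: "L > 0" "L \<le> \<bar>y j0 - p j0\<bar>"
    and j1: "j1 < k" "y' j1 \<noteq> p j1"
    and D: "\<forall>i<k. \<bar>y i - y' i\<bar> \<le> D"
    and j: "j < k"
  shows "\<bar>radproj k c s p y j - radproj k c s p y' j\<bar> \<le> 6 * s * D / L"
proof -
  have p: "p \<in> cube_int k c s" using mid_cube_int[OF s pR] mid by blast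
  define u where "u = (\<lambda>i. y i - p i)"
  define u' where "u' = (\<lambda>i. y' i - p i)"
  define N where "N = NN k c s p u"
  define N' where "N' = NN k c s p u'"
  have yj0: "y j0 \<noteq> p j0" using L by auto
  have f1: "radproj k c s p y = (\<lambda>i. p i + (1 / N) * u i)"
    unfolding N_def u_def by (rule radproj_formula[OF k p y j0 yj0])
  have f2: "radproj k c s p y' = (\<lambda>i. p i + (1 / N') * u' i)"
    unfolding N'_def u'_def by (rule radproj_formula[OF k p y' j1])
  have "L \<le> \<bar>u j0\<bar>" using L by (simp add: u_def)
  also have "\<dots> \<le> (3 * s / 2) * gg c s p j0 (u j0)" using gg_lower_mid[OF s] mid j0 by blast
  also have "\<dots> \<le> (3 * s / 2) * N" unfolding N_def using NN_ge[OF j0] s by (intro mult_left_mono) auto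
  finally have LN: "L \<le> (3 * s / 2) * N" .
  then have Npos: "N > 0" using L s by (metis (no_types) less_le_trans mult_pos_pos zero_less_mult_pos divide_pos_pos zero_less_numeral mult_nonneg_nonpos not_le order.strict_trans2 less_eq_real_def)
  have "0 < gg c s p j1 (u' j1)" using gg_pos[OF p j1(1)] j1 by (simp add: u'_def)
  also have "\<dots> \<le> N'" unfolding N'_def by (rule NN_ge[OF j1(1)])
  finally have N'pos: "0 < N'" .
  have Du: "\<forall>i<k. \<bar>u i - u' i\<bar> \<le> D" "\<forall>i<k. \<bar>u' i - u i\<bar> \<le> D" using D by (auto simp: u_def u'_def abs_minus_commute)
  define q where "q = D / (s / 2)"
  have "N \<le> N' + q" unfolding N_def N'_def q_def by (rule NN_lip_mid[OF k s mid Du(1)])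
  moreover have "N' \<le> N + q" unfolding N_def N'_def q_def by (rule NN_lip_mid[OF k s mid Du(2)])
  ultimately have dN0: "\<bar>N' - N\<bar> \<le> q" unfolding abs_le_iff by linarith
  have "q = 2 * D / s" unfolding q_def by simp
  with dN0 have dN: "\<bar>N' - N\<bar> \<le> 2 * D / s" by simp
  have uj: "\<bar>u' j\<bar> \<le> (3 * s / 2) * N'"
  proof -
    have "\<bar>u' j\<bar> \<le> (3 * s / 2) * gg c s p j (u' j)" using gg_lower_mid[OF s] mid j by blast
    also have "\<dots> \<le> (3 * s / 2) * N'" unfolding N'_def using NN_ge[OF j] s by (intro mult_left_mono) auto
    finally show ?thesis .
  qed
  have D0: "0 \<le> D" using D j by (meson abs_ge_zero order_trans)
  have eq: "radproj k c s p y j - radproj k c s p y' j = (u j - u' j) / N + (u' j / N') * ((N' - N) / N)"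
    using Npos N'pos by (simp add: f1 f2 field_simps)
  have "\<bar>(u j - u' j) / N\<bar> \<le> D / N" using Du j Npos by (simp add: divide_right_mono)
  moreover have "\<bar>(u' j / N') * ((N' - N) / N)\<bar> \<le> (3 * s / 2) * ((2 * D / s) / N)"
  proof -
    have "\<bar>u' j / N'\<bar> \<le> 3 * s / 2" using uj N'pos by (simp add: field_simps)
    moreover have "\<bar>(N' - N) / N\<bar> \<le> (2 * D / s) / N"
      using divide_right_mono[OF dN, of N] Npos by simp
    ultimately show ?thesis unfolding abs_mult using s by (intro mult_mono) auto
  qed
  ultimately have "\<bar>radproj k c s p y j - radproj k c s p y' j\<bar> \<le> D / N + (3 * s / 2) * ((2 * D / s) / N)"
    unfolding eq by (rule order_trans[OF abs_triangle_ineq add_mono])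
  also have "\<dots> = 4 * D / N" using s by (simp add: field_simps)
  also have "\<dots> \<le> 4 * D / (2 * L / (3 * s))"
    using LN L s D0 Npos by (intro divide_left_mono) (auto simp: field_simps)
  also have "\<dots> = 6 * s * D / L" using L s by (simp add: field_simps)
  finally show ?thesis .
qed


lemma radproj_Rk:
  assumes k: "k > 0" and p: "p \<in> cube_int k c s" and y: "y \<in> Rk k" and jy: "j0 < k" "y j0 \<noteq> p j0"
  shows "radproj k c s p y \<in> Rk k"
  using radproj_formula[OF assms] p y by (simp add: Rk_def cube_int_def)

lemma ball_image:
  assumes k: "k > 0" and s: "s > 0" and pR: "p \<in> Rk k" and mid: "\<forall>j<k. \<bar>p j - c j\<bar> \<le> s / 2"
    and j0: "j0 < k" and dmax: "\<forall>j<k. \<bar>p j - x j\<bar> \<le> \<bar>p j0 - x j0\<bar>"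
    and d: "2 * r < \<bar>p j0 - x j0\<bar>"
    and XR: "X \<subseteq> Rk k" and y0: "y0 \<in> X" "y0 \<in> linf_cball k x r"
  shows "radproj k c s p ` (X \<inter> linf_cball k x r) \<subseteq>
           linf_cball k (radproj k c s p y0) (24 * s * r / \<bar>p j0 - x j0\<bar>)"
    and "radproj k c s p y0 \<in> Rk k"
proof -
  define d where "d = \<bar>p j0 - x j0\<bar>"
  have p: "p \<in> cube_int k c s" using mid_cube_int[OF s pR] mid by blast
  have "\<bar>y0 j0 - x j0\<bar> \<le> r" using y0(2) j0 unfolding linf_cball_def by blast
  then have r0: "0 \<le> r" by linarith
  have dpos: "0 < d" using d r0 d_def by linarith
  have far: "d / 2 \<le> \<bar>y j0 - p j0\<bar>" if "y \<in> linf_cball k x r" for y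
  proof -
    have "\<bar>y j0 - x j0\<bar> \<le> r" using that j0 by (simp add: linf_cball_def)
    then show ?thesis using d d_def by (simp add: abs_le_iff abs_if split: if_splits) linarith?
  qed
  have y0R: "y0 \<in> Rk k" using XR y0 by auto
  have y0ne: "y0 j0 \<noteq> p j0" using far[OF y0(2)] dpos by auto
  show R0: "radproj k c s p y0 \<in> Rk k" by (rule radproj_Rk[OF k p y0R j0 y0ne])
  show "radproj k c s p ` (X \<inter> linf_cball k x r) \<subseteq> linf_cball k (radproj k c s p y0) (24 * s * r / \<bar>p j0 - x j0\<bar>)"
  proof
    fix z assume "z \<in> radproj k c s p ` (X \<inter> linf_cball k x r)"
    then obtain y where y: "y \<in> X" "y \<in> linf_cball k x r" and z: "z = radproj k c s p y" by auto
    have yR: "y \<in> Rk k" using XR y by auto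
    have yne: "y j0 \<noteq> p j0" using far[OF y(2)] dpos by auto
    have zR: "z \<in> Rk k" unfolding z by (rule radproj_Rk[OF k p yR j0 yne])
    have D: "\<forall>i<k. \<bar>y i - y0 i\<bar> \<le> 2 * r"
    proof (intro allI impI)
      fix i assume "i < k"
      then have "\<bar>y i - x i\<bar> \<le> r" "\<bar>y0 i - x i\<bar> \<le> r" using y(2) y0(2) by (auto simp: linf_cball_def)
      then show "\<bar>y i - y0 i\<bar> \<le> 2 * r" by linarith
    qed
    have "\<forall>j<k. \<bar>z j - radproj k c s p y0 j\<bar> \<le> 6 * s * (2 * r) / (d / 2)"
      using radproj_lip[OF k s pR mid yR y0R j0 _ far[OF y(2)] j0 y0ne D] dpos unfolding z by auto
    moreover have "6 * s * (2 * r) / (d / 2) = 24 * s * r / d" by simp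
    ultimately show "z \<in> linf_cball k (radproj k c s p y0) (24 * s * r / \<bar>p j0 - x j0\<bar>)"
      using zR by (simp add: linf_cball_def d_def mult.assoc)
  qed
qed



definition wt :: "real \<Rightarrow> real \<Rightarrow> ennreal" where
  "wt al t = (if t = 0 then \<infinity> else ennreal (\<bar>t\<bar> powr (- al)))"

lemma prod_mono_ennreal:
  fixes f g :: "'a \<Rightarrow> ennreal"
  assumes "\<And>i. i \<in> A \<Longrightarrow> f i \<le> g i"
  shows "prod f A \<le> prod g A"
  using assms
proof (induction A rule: infinite_finite_induct)
  case (insert x F)
  then show ?case by (simp add: mult_mono)
qed auto

lemma dpow_le_prod:
  fixes x p :: "nat \<Rightarrow> real"
  assumes k: "k > 0" and al: "al \<ge> 0" and dmax: "\<forall>j<k. \<bar>p j - x j\<bar> \<le> d" and d: "d > 0"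
  shows "ennreal (d powr (- (real k * al))) \<le> (\<Prod>j<k. wt al (p j - x j))"
proof -
  have "d powr (- (real k * al)) = (d powr (- al)) ^ k"
    using d by (simp add: powr_realpow[symmetric] powr_powr mult.commute powr_power)
  also have "ennreal \<dots> = (\<Prod>j<k. ennreal (d powr (- al)))"
    by (simp add: ennreal_power prod_constant)
  also have "\<dots> \<le> (\<Prod>j<k. wt al (p j - x j))"
  proof (rule prod_mono_ennreal)
    fix j assume "j \<in> {..<k}"
    then have jd: "\<bar>p j - x j\<bar> \<le> d" using dmax by auto
    show "ennreal (d powr - al) \<le> wt al (p j - x j)"
    proof (cases "p j - x j = 0")
      case True then show ?thesis by (simp add: wt_def)
    next
      case False
      then have "d powr (- al) \<le> \<bar>p j - x j\<bar> powr (- al)"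
        using jd al by (intro powr_mono2') auto
      then show ?thesis using False by (simp add: wt_def)
    qed
  qed
  finally show ?thesis .
qed


lemma HC_le_cover:
  assumes "\<forall>i. z i \<in> Rk k \<and> 0 \<le> \<rho> i" "A \<subseteq> (\<Union>i. linf_cball k (z i) (\<rho> i))"
  shows "HC k m A \<le> (\<Sum>i. ennreal (\<rho> i powr m))"
  unfolding HC_def
  by (rule INF_lower2[of "(z, \<rho>)"]) (use assms in auto)

lemma proj_HC:
  assumes k: "k > 0" and s: "s > 0" and m: "m > 0" and pR: "p \<in> Rk k" and mid: "\<forall>j<k. \<bar>p j - c j\<bar> \<le> s / 2"
    and XR: "X \<subseteq> Rk k" and xR: "\<forall>i. x i \<in> Rk k" and r0: "\<forall>i. 0 \<le> r i"
    and cov: "X \<subseteq> (\<Union>i. linf_cball k (x i) (r i))"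
    and far: "\<forall>i. \<exists>j<k. 2 * r i < \<bar>p j - x i j\<bar>"
  shows "HC k m (radproj k c s p ` X) \<le>
     ennreal ((24 * s) powr m) * (\<Sum>i. ennreal (r i powr m) * (\<Prod>j<k. wt (m / real k) (p j - x i j)))"
proof -
  define d where "d i = Max ((\<lambda>j. \<bar>p j - x i j\<bar>) ` {..<k})" for i
  have dmax: "\<forall>j<k. \<bar>p j - x i j\<bar> \<le> d i" for i unfolding d_def by (auto intro: Max_ge)
  have "d i \<in> (\<lambda>j. \<bar>p j - x i j\<bar>) ` {..<k}" for i unfolding d_def using k by (intro Max_in) auto
  then have "\<forall>i. \<exists>j. j < k \<and> d i = \<bar>p j - x i j\<bar>" by (auto simp: image_iff)
  from choice[OF this] obtain j0 where "\<forall>i. j0 i < k \<and> d i = \<bar>p (j0 i) - x i (j0 i)\<bar>" by blast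
  then have j0: "\<And>i. j0 i < k" "\<And>i. d i = \<bar>p (j0 i) - x i (j0 i)\<bar>" by auto
  have dr: "2 * r i < d i" for i
  proof -
    obtain j where "j < k" "2 * r i < \<bar>p j - x i j\<bar>" using far by blast
    then show ?thesis using dmax[of i] by fastforce
  qed
  have dpos: "0 < d i" for i using dr[of i] r0[rule_format, of i] by linarith
  define E where "E i = (\<exists>y. y \<in> X \<and> y \<in> linf_cball k (x i) (r i))" for i
  define y0 where "y0 i = (SOME y. y \<in> X \<and> y \<in> linf_cball k (x i) (r i))" for i
  have y0: "y0 i \<in> X" "y0 i \<in> linf_cball k (x i) (r i)" if "E i" for i
    using someI_ex[OF that[unfolded E_def]] unfolding y0_def by auto
  define z where "z i = (if E i then radproj k c s p (y0 i) else (\<lambda>_. 0))" for i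
  define \<rho> where "\<rho> i = (if E i then 24 * s * r i / d i else 0)" for i
  have BI: "radproj k c s p ` (X \<inter> linf_cball k (x i) (r i)) \<subseteq> linf_cball k (z i) (\<rho> i)"
    and zR: "z i \<in> Rk k" for i
  proof -
    show "z i \<in> Rk k"
    proof (cases "E i")
      case True
      show ?thesis using ball_image(2)[OF k s pR mid j0(1)[of i] _ _ XR y0[OF True]] dmax j0(2) dr
        by (simp add: z_def True)
    next
      case False then show ?thesis by (simp add: z_def Rk_def)
    qed
    show "radproj k c s p ` (X \<inter> linf_cball k (x i) (r i)) \<subseteq> linf_cball k (z i) (\<rho> i)"
    proof (cases "E i")
      case True
      show ?thesis using ball_image(1)[OF k s pR mid j0(1)[of i] _ _ XR y0[OF True]] dmax j0(2) dr
        by (simp add: z_def \<rho>_def True)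
    next
      case False then show ?thesis by (auto simp: E_def)
    qed
  qed
  have rho0: "0 \<le> \<rho> i" for i using s r0 dpos[of i] by (simp add: \<rho>_def)
  have "HC k m (radproj k c s p ` X) \<le> (\<Sum>i. ennreal (\<rho> i powr m))"
  proof (rule HC_le_cover)
    show "\<forall>i. z i \<in> Rk k \<and> 0 \<le> \<rho> i" using zR rho0 by auto
    show "radproj k c s p ` X \<subseteq> (\<Union>i. linf_cball k (z i) (\<rho> i))"
    proof
      fix w assume "w \<in> radproj k c s p ` X"
      then obtain y where y: "y \<in> X" "w = radproj k c s p y" by auto
      then obtain i where "y \<in> linf_cball k (x i) (r i)" using cov by auto
      then have "w \<in> linf_cball k (z i) (\<rho> i)" using BI[of i] y by auto
      then show "w \<in> (\<Union>i. linf_cball k (z i) (\<rho> i))" by auto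
    qed
  qed
  also have "\<dots> \<le> (\<Sum>i. ennreal ((24 * s) powr m) * (ennreal (r i powr m) * (\<Prod>j<k. wt (m / real k) (p j - x i j))))"
  proof (rule suminf_le)
    fix i
    have "\<rho> i powr m \<le> (24 * s) powr m * (r i powr m * d i powr (- m))"
    proof (cases "E i")
      case True
      have "\<rho> i powr m = (24 * s) powr m * r i powr m / d i powr m"
        using s r0 dpos[of i] by (simp add: \<rho>_def True powr_divide powr_mult)
      also have "\<dots> = (24 * s) powr m * (r i powr m * d i powr (- m))"
        by (simp add: powr_minus divide_inverse)
      finally show ?thesis by simp
    next
      case False then show ?thesis by (simp add: \<rho>_def)
    qed
    then have "ennreal (\<rho> i powr m) \<le> ennreal ((24 * s) powr m) * (ennreal (r i powr m) * ennreal (d i powr (- (real k * (m / real k)))))"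
      using k by (simp add: ennreal_mult[symmetric])
    also have "\<dots> \<le> ennreal ((24 * s) powr m) * (ennreal (r i powr m) * (\<Prod>j<k. wt (m / real k) (p j - x i j)))"
      using dpow_le_prod[OF k _ dmax[of i] dpos[of i], of "m / real k"] m
      by (intro mult_left_mono) auto
    finally show "ennreal (\<rho> i powr m) \<le> ennreal ((24 * s) powr m) * (ennreal (r i powr m) * (\<Prod>j<k. wt (m / real k) (p j - x i j)))" .
  qed auto
  also have "\<dots> = ennreal ((24 * s) powr m) * (\<Sum>i. ennreal (r i powr m) * (\<Prod>j<k. wt (m / real k) (p j - x i j)))"
    by (rule ennreal_suminf_cmult)
  finally show ?thesis .
qed



lemma int_half:
  assumes al: "0 \<le> al" "al < 1" and l: "0 < l"
  shows "(\<integral>\<^sup>+ t. ennreal (\<bar>t\<bar> powr (- al)) * indicator {0..l} t \<partial>lborel) = ennreal (l powr (1 - al) / (1 - al))"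
proof -
  have hi: "((\<lambda>t. t powr (- al)) has_integral (l powr (- al + 1) / (- al + 1))) {0..l}"
    using al l by (intro has_integral_powr_from_0) auto
  have "(\<integral>\<^sup>+ t. ennreal (indicator {0..l} t * t powr (- al)) \<partial>lborel) = ennreal (l powr (- al + 1) / (- al + 1))"
    by (rule nn_integral_has_integral_lebesgue[OF _ hi]) auto
  moreover have "(\<integral>\<^sup>+ t. ennreal (\<bar>t\<bar> powr (- al)) * indicator {0..l} t \<partial>lborel) =
      (\<integral>\<^sup>+ t. ennreal (indicator {0..l} t * t powr (- al)) \<partial>lborel)"
    by (intro nn_integral_cong) (auto simp: indicator_def)
  ultimately show ?thesis by (simp add: add.commute)
qed


lemma int_sym:
  assumes al: "0 \<le> al" "al < 1" and l: "0 < l"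
  shows "(\<integral>\<^sup>+ t. ennreal (\<bar>t\<bar> powr (- al)) * indicator {-l..l} t \<partial>lborel) \<le> ennreal (2 * (l powr (1 - al) / (1 - al)))"
proof -
  have m: "(\<lambda>t. ennreal (\<bar>t\<bar> powr (- al)) * indicator {-l..0} t) \<in> borel_measurable borel" by measurable
  have "(\<integral>\<^sup>+ t. ennreal (\<bar>t\<bar> powr (- al)) * indicator {-l..0} t \<partial>lborel)
      = (\<integral>\<^sup>+ t. ennreal (\<bar>t\<bar> powr (- al)) * indicator {-l..0} (- t) \<partial>lborel)"
    using nn_integral_real_affine[OF m, of "-1" 0] by simp
  also have "\<dots> = (\<integral>\<^sup>+ t. ennreal (\<bar>t\<bar> powr (- al)) * indicator {0..l} t \<partial>lborel)"
    by (intro nn_integral_cong) (auto simp: indicator_def)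
  finally have neg: "(\<integral>\<^sup>+ t. ennreal (\<bar>t\<bar> powr (- al)) * indicator {-l..0} t \<partial>lborel) = ennreal (l powr (1 - al) / (1 - al))"
    using int_half[OF al l] by simp
  have "(\<integral>\<^sup>+ t. ennreal (\<bar>t\<bar> powr (- al)) * indicator {-l..l} t \<partial>lborel) \<le>
     (\<integral>\<^sup>+ t. ennreal (\<bar>t\<bar> powr (- al)) * indicator {0..l} t + ennreal (\<bar>t\<bar> powr (- al)) * indicator {-l..0} t \<partial>lborel)"
    by (intro nn_integral_mono) (auto simp: indicator_def)
  also have "\<dots> = (\<integral>\<^sup>+ t. ennreal (\<bar>t\<bar> powr (- al)) * indicator {0..l} t \<partial>lborel) + (\<integral>\<^sup>+ t. ennreal (\<bar>t\<bar> powr (- al)) * indicator {-l..0} t \<partial>lborel)"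
    by (intro nn_integral_add) auto
  also have "\<dots> = ennreal (2 * (l powr (1 - al) / (1 - al)))"
    using int_half[OF al l] neg al by (simp add: ennreal_plus[symmetric] del: ennreal_plus)
  finally show ?thesis .
qed

lemma int_shift:
  assumes al: "0 \<le> al" "al < 1" and l: "0 < l"
  shows "(\<integral>\<^sup>+ t. ennreal (\<bar>t - x\<bar> powr (- al)) * indicator {x-l..x+l} t \<partial>lborel) \<le> ennreal (2 * (l powr (1 - al) / (1 - al)))"
proof -
  have m: "(\<lambda>t. ennreal (\<bar>t - x\<bar> powr (- al)) * indicator {x-l..x+l} t) \<in> borel_measurable borel" by measurable
  have "(\<integral>\<^sup>+ t. ennreal (\<bar>t - x\<bar> powr (- al)) * indicator {x-l..x+l} t \<partial>lborel)
      = (\<integral>\<^sup>+ t. ennreal (\<bar>t\<bar> powr (- al)) * indicator {x-l..x+l} (x + t) \<partial>lborel)"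
    using nn_integral_real_affine[OF m, of 1 x] by simp
  also have "\<dots> = (\<integral>\<^sup>+ t. ennreal (\<bar>t\<bar> powr (- al)) * indicator {-l..l} t \<partial>lborel)"
    by (intro nn_integral_cong) (auto simp: indicator_def)
  finally show ?thesis using int_sym[OF al l] by simp
qed

definition Kc :: "real \<Rightarrow> real" where "Kc al = 2 / (1 - al) + 1"

lemma one_dim:
  assumes al: "0 \<le> al" "al < 1" and l: "0 < l"
  shows "(\<integral>\<^sup>+ t. wt al (t - x) * indicator {a0..a0+l} t \<partial>lborel) \<le> ennreal (Kc al * l powr (1 - al))"
proof -
  have "(\<integral>\<^sup>+ t. wt al (t - x) * indicator {a0..a0+l} t \<partial>lborel) =
        (\<integral>\<^sup>+ t. ennreal (\<bar>t - x\<bar> powr (- al)) * indicator {a0..a0+l} t \<partial>lborel)"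
    by (intro nn_integral_cong_AE eventually_mono[OF AE_lborel_singleton[of x]]) (auto simp: wt_def)
  also have "\<dots> \<le> (\<integral>\<^sup>+ t. ennreal (\<bar>t - x\<bar> powr (- al)) * indicator {x-l..x+l} t + ennreal (l powr (- al)) * indicator {a0..a0+l} t \<partial>lborel)"
  proof (intro nn_integral_mono)
    fix t
    show "ennreal (\<bar>t - x\<bar> powr (- al)) * indicator {a0..a0+l} t \<le>
       ennreal (\<bar>t - x\<bar> powr (- al)) * indicator {x-l..x+l} t + ennreal (l powr (- al)) * indicator {a0..a0+l} t"
    proof (cases "t \<in> {x-l..x+l}")
      case True then show ?thesis by (auto simp: indicator_def)
    next
      case False
      then have "l \<le> \<bar>t - x\<bar>" by auto
      then have "\<bar>t - x\<bar> powr (- al) \<le> l powr (- al)" using l al by (intro powr_mono2') auto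
      then show ?thesis using False by (auto simp: indicator_def)
    qed
  qed
  also have "\<dots> = (\<integral>\<^sup>+ t. ennreal (\<bar>t - x\<bar> powr (- al)) * indicator {x-l..x+l} t \<partial>lborel) +
       (\<integral>\<^sup>+ t. ennreal (l powr (- al)) * indicator {a0..a0+l} t \<partial>lborel)"
    by (intro nn_integral_add) auto
  also have "\<dots> \<le> ennreal (2 * (l powr (1 - al) / (1 - al))) + ennreal (l powr (- al)) * ennreal l"
    using int_shift[OF al l, of x] l by (intro add_mono) (auto simp: nn_integral_cmult_indicator)
  also have "\<dots> = ennreal (2 * (l powr (1 - al) / (1 - al)) + l powr (1 - al))"
    using al l powr_add[of l "-al" 1] by (simp add: ennreal_mult[symmetric] ennreal_plus[symmetric] powr_add[symmetric] del: ennreal_plus)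
  also have "\<dots> = ennreal (Kc al * l powr (1 - al))"
    by (simp add: Kc_def algebra_simps)
  finally show ?thesis .
qed



abbreviation MM :: "nat \<Rightarrow> (nat \<Rightarrow> real) measure" where
  "MM k \<equiv> Pi\<^sub>M {..<k} (\<lambda>_. lborel)"

definition Gc :: "nat \<Rightarrow> (nat \<Rightarrow> real) \<Rightarrow> real \<Rightarrow> (nat \<Rightarrow> real) set" where
  "Gc k c s = Pi\<^sub>E {..<k} (\<lambda>j. {c j - s / 2 .. c j - s / 2 + s})"

lemma wt_meas[measurable]: "(\<lambda>t. wt al (t - x)) \<in> borel_measurable borel"
  unfolding wt_def by measurable

lemma prod_int:
  assumes al: "0 \<le> al" "al < 1" and s: "0 < s"
  shows "(\<integral>\<^sup>+ q. (\<Prod>j<k. wt al (q j - x j)) * indicator (Gc k c s) q \<partial>MM k)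
     \<le> ennreal ((Kc al * s powr (1 - al)) ^ k)"
proof -
  interpret product_sigma_finite "\<lambda>_. lborel :: real measure" by standard
  have "(\<integral>\<^sup>+ q. (\<Prod>j<k. wt al (q j - x j)) * indicator (Gc k c s) q \<partial>MM k)
      = (\<integral>\<^sup>+ q. (\<Prod>j\<in>{..<k}. (\<lambda>j t. wt al (t - x j) * indicator {c j - s / 2 .. c j - s / 2 + s} t) j (q j)) \<partial>MM k)"
  proof (intro nn_integral_cong)
    fix q assume q: "q \<in> space (MM k)"
    show "(\<Prod>j<k. wt al (q j - x j)) * indicator (Gc k c s) q =
      (\<Prod>j\<in>{..<k}. (\<lambda>j t. wt al (t - x j) * indicator {c j - s / 2 .. c j - s / 2 + s} t) j (q j))"
    proof (cases "\<forall>j<k. q j \<in> {c j - s / 2 .. c j - s / 2 + s}")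
      case True
      then have "q \<in> Gc k c s" using q by (auto simp: Gc_def space_PiM PiE_iff)
      then show ?thesis using True by (simp add: indicator_def)
    next
      case False
      then obtain j where j: "j < k" "q j \<notin> {c j - s / 2 .. c j - s / 2 + s}" by auto
      then have "q \<notin> Gc k c s" by (auto simp: Gc_def PiE_iff)
      moreover have "(\<Prod>j\<in>{..<k}. (\<lambda>j t. wt al (t - x j) * indicator {c j - s / 2 .. c j - s / 2 + s} t) j (q j)) = 0"
        using j by (intro prod_zero bexI[of _ j]) auto
      ultimately show ?thesis by simp
    qed
  qed
  also have "\<dots> = (\<Prod>j\<in>{..<k}. \<integral>\<^sup>+ t. wt al (t - x j) * indicator {c j - s / 2 .. c j - s / 2 + s} t \<partial>lborel)"
    by (rule product_nn_integral_prod) auto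
  also have "\<dots> \<le> (\<Prod>j\<in>{..<k}. ennreal (Kc al * s powr (1 - al)))"
    by (intro prod_mono_ennreal one_dim al s)
  also have "\<dots> = ennreal ((Kc al * s powr (1 - al)) ^ k)"
    using al by (simp add: ennreal_power Kc_def prod_constant)
  finally show ?thesis .
qed


definition FF :: "nat \<Rightarrow> real \<Rightarrow> (nat \<Rightarrow> nat \<Rightarrow> real) \<Rightarrow> (nat \<Rightarrow> real) \<Rightarrow> (nat \<Rightarrow> real) \<Rightarrow> ennreal" where
  "FF k m x r q = (\<Sum>i. ennreal (r i powr m) * (\<Prod>j<k. wt (m / real k) (q j - x i j)))"

lemma prod_wt_meas[measurable]: "(\<lambda>q. \<Prod>j<k. wt al (q j - x j)) \<in> borel_measurable (MM k)"
  by measurable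

lemma FF_meas[measurable]: "FF k m x r \<in> borel_measurable (MM k)"
  unfolding FF_def by measurable

lemma Gc_sets[measurable]: "Gc k c s \<in> sets (MM k)"
  unfolding Gc_def by (intro sets_PiM_I_finite) auto

lemma sum_int:
  assumes m: "0 < m" "m < real k" and s: "0 < s"
  shows "(\<integral>\<^sup>+ q. FF k m x r q * indicator (Gc k c s) q \<partial>MM k)
     \<le> ennreal ((Kc (m / real k) * s powr (1 - m / real k)) ^ k) * (\<Sum>i. ennreal (r i powr m))"
proof -
  have al: "0 \<le> m / real k" "m / real k < 1" using m by auto
  have "(\<integral>\<^sup>+ q. FF k m x r q * indicator (Gc k c s) q \<partial>MM k)
      = (\<integral>\<^sup>+ q. (\<Sum>i. ennreal (r i powr m) * ((\<Prod>j<k. wt (m / real k) (q j - x i j)) * indicator (Gc k c s) q)) \<partial>MM k)"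
    unfolding FF_def by (intro nn_integral_cong) (simp add: mult.assoc ennreal_suminf_multc[symmetric] del: ennreal_suminf_multc)
  also have "\<dots> = (\<Sum>i. \<integral>\<^sup>+ q. ennreal (r i powr m) * ((\<Prod>j<k. wt (m / real k) (q j - x i j)) * indicator (Gc k c s) q) \<partial>MM k)"
    by (rule nn_integral_suminf) measurable
  also have "\<dots> = (\<Sum>i. ennreal (r i powr m) * \<integral>\<^sup>+ q. (\<Prod>j<k. wt (m / real k) (q j - x i j)) * indicator (Gc k c s) q \<partial>MM k)"
    by (subst nn_integral_cmult) auto
  also have "\<dots> \<le> (\<Sum>i. ennreal (r i powr m) * ennreal ((Kc (m / real k) * s powr (1 - m / real k)) ^ k))"
    by (intro suminf_le mult_left_mono prod_int al s) auto
  also have "\<dots> = ennreal ((Kc (m / real k) * s powr (1 - m / real k)) ^ k) * (\<Sum>i. ennreal (r i powr m))"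
    by (simp add: mult.commute)
  finally show ?thesis .
qed

lemma Gc_measure:
  assumes s: "0 < s"
  shows "emeasure (MM k) (Gc k c s) = ennreal (s ^ k)"
proof -
  interpret product_sigma_finite "\<lambda>_. lborel :: real measure" by standard
  have "emeasure (MM k) (Gc k c s) = (\<Prod>j<k. emeasure lborel {c j - s / 2 .. c j - s / 2 + s})"
    unfolding Gc_def by (rule emeasure_PiM) auto
  also have "\<dots> = (\<Prod>j<k. ennreal s)" using s by simp
  also have "\<dots> = ennreal (s ^ k)" using s by (simp add: ennreal_power prod_constant)
  finally show ?thesis .
qed

lemma box_measure:
  assumes r: "0 \<le> r"
  shows "emeasure (MM k) (Pi\<^sub>E {..<k} (\<lambda>l. {x l - 2 * r .. x l + 2 * r})) = ennreal ((4 * r) ^ k)"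
proof -
  interpret product_sigma_finite "\<lambda>_. lborel :: real measure" by standard
  have "emeasure (MM k) (Pi\<^sub>E {..<k} (\<lambda>l. {x l - 2 * r .. x l + 2 * r})) = (\<Prod>j<k. emeasure lborel {x j - 2 * r .. x j + 2 * r})"
    by (rule emeasure_PiM) auto
  also have "\<dots> = (\<Prod>j<k. ennreal (4 * r))" using r by simp
  also have "\<dots> = ennreal ((4 * r) ^ k)" using r by (simp add: ennreal_power prod_constant)
  finally show ?thesis .
qed



definition Eb :: "nat \<Rightarrow> (nat \<Rightarrow> real) \<Rightarrow> real \<Rightarrow> (nat \<Rightarrow> real) set" where
  "Eb k x r = Pi\<^sub>E {..<k} (\<lambda>l. {x l - 2 * r .. x l + 2 * r})"

lemma Eb_sets[measurable]: "Eb k x r \<in> sets (MM k)"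
  unfolding Eb_def by (intro sets_PiM_I_finite) auto

lemma powr_k:
  assumes "0 < s" "0 < k"
  shows "(s powr (1 - m / real k)) ^ k = s powr (real k - m)"
proof -
  have "(s powr (1 - m / real k)) ^ k = (s powr (1 - m / real k)) powr real k"
    using assms by (simp add: powr_realpow)
  also have "\<dots> = s powr ((1 - m / real k) * real k)" by (simp add: powr_powr)
  also have "(1 - m / real k) * real k = real k - m" using assms by (simp add: field_simps)
  finally show ?thesis by simp
qed

lemma ennreal_inv_mult_lt:
  fixes F :: ennreal
  assumes "T \<ge> 0" "\<not> (1 \<le> inverse (ennreal T) * F)"
  shows "F \<le> ennreal T"
proof (cases "T = 0")
  case True
  then have "\<not> (1 \<le> top * F)" using assms by simp
  then have "F = 0" by (auto simp: ennreal_top_mult split: if_splits)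
  then show ?thesis by simp
next
  case False
  then have T: "T > 0" using assms by simp
  then have inv: "inverse (ennreal T) = ennreal (1 / T)" by (simp add: inverse_ennreal inverse_eq_divide)
  show ?thesis
  proof (cases F)
    case (real f)
    have "ennreal (1 / T * f) = ennreal (1 / T) * ennreal f" using T real by (intro ennreal_mult) auto
    then have "\<not> (ennreal 1 \<le> ennreal (1 / T * f))" using assms(2) inv real by simp
    then have "1 / T * f < 1" using T real by (simp add: ennreal_le_iff2)
    then have "f < T" using T by (simp add: field_simps)
    then show ?thesis using real by simp
  next
    case top
    then show ?thesis using assms(2) inv T by simp
  qed
qed


definition Ck :: "real \<Rightarrow> nat \<Rightarrow> real" where
  "Ck m k = 8 * 24 powr m * Kc (m / real k) ^ k"

lemma Kc_pos: "al < 1 \<Longrightarrow> 0 < Kc al"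
  unfolding Kc_def by (simp add: add_pos_nonneg)

lemma core:
  fixes x :: "nat \<Rightarrow> nat \<Rightarrow> nat \<Rightarrow> real" and r :: "nat \<Rightarrow> nat \<Rightarrow> real" and S :: "nat \<Rightarrow> real"
  assumes m: "0 < m" "m < real k" and s: "0 < s" and cR: "c \<in> Rk k" and X: "X \<subseteq> cube_int k c s"
    and xR: "\<forall>j i. x j i \<in> Rk k" and r0: "\<forall>j i. 0 \<le> r j i"
    and cov: "\<forall>j. X \<subseteq> (\<Union>i. linf_cball k (x j i) (r j i))"
    and S: "\<forall>j. (\<Sum>i. ennreal (r j i powr m)) = ennreal (S j)" "\<forall>j. 0 \<le> S j"
    and Eb: "emeasure (MM k) (\<Union>j. \<Union>i. Eb k (x j i) (r j i)) \<le> ennreal (s ^ k / 2)"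
  shows "\<exists>p \<in> cube_int k c s - X. \<forall>j. HC k m (radproj k c s p ` X) \<le> ennreal (Ck m k * 2 ^ j * S j)"
proof -
  have k: "0 < k" using m by auto
  define al where "al = m / real k"
  have al: "0 \<le> al" "al < 1" using m by (auto simp: al_def)
  define K where "K = Kc al"
  have K: "0 < K" unfolding K_def by (rule Kc_pos[OF al(2)])
  define T where "T j = 2 ^ (j + 3) * K ^ k * S j / s powr m" for j
  have T0: "0 \<le> T j" for j using S(2) K s by (simp add: T_def)
  define bad where "bad j = {q \<in> Gc k c s. 1 \<le> inverse (ennreal (T j)) * FF k m (x j) (r j) q}" for j
  have bad_sets: "bad j \<in> sets (MM k)" for j
  proof -
    have "bad j = Gc k c s \<inter> {q \<in> space (MM k). 1 \<le> inverse (ennreal (T j)) * FF k m (x j) (r j) q}"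
      using sets.sets_into_space[OF Gc_sets] by (auto simp: bad_def)
    also have "\<dots> \<in> sets (MM k)" by measurable
    finally show ?thesis .
  qed
  have int: "(\<integral>\<^sup>+ q. FF k m (x j) (r j) q * indicator (Gc k c s) q \<partial>MM k) \<le> ennreal (K ^ k * s powr (real k - m) * S j)" for j
  proof -
    have "(\<integral>\<^sup>+ q. FF k m (x j) (r j) q * indicator (Gc k c s) q \<partial>MM k)
       \<le> ennreal ((K * s powr (1 - al)) ^ k) * ennreal (S j)"
      using sum_int[OF m s, of "x j" "r j" c] S(1) by (simp add: K_def al_def)
    also have "\<dots> = ennreal (K ^ k * s powr (real k - m) * S j)"
      using powr_k[OF s k, of m] K S(2) s
      by (simp add: ennreal_mult[symmetric] power_mult_distrib al_def)
    finally show ?thesis .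
  qed
  have bad_meas: "emeasure (MM k) (bad j) \<le> ennreal (s ^ k / 2 ^ (j + 3))" for j
  proof -
    have "emeasure (MM k) (bad j) \<le> inverse (ennreal (T j)) * (\<integral>\<^sup>+ q. FF k m (x j) (r j) q * indicator (Gc k c s) q \<partial>MM k)"
      unfolding bad_def by (rule nn_integral_Markov_inequality) measurable
    also have "\<dots> \<le> inverse (ennreal (T j)) * ennreal (K ^ k * s powr (real k - m) * S j)"
      by (intro mult_left_mono int) auto
    also have "\<dots> \<le> ennreal (s ^ k / 2 ^ (j + 3))"
    proof (cases "S j = 0")
      case True then show ?thesis by simp
    next
      case False
      then have Sp: "0 < S j" using S(2) by (simp add: less_le)
      then have Tp: "0 < T j" using K s by (simp add: T_def)
      have "inverse (ennreal (T j)) * ennreal (K ^ k * s powr (real k - m) * S j)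
          = ennreal (inverse (T j) * (K ^ k * s powr (real k - m) * S j))"
        using Tp K Sp s by (simp add: inverse_ennreal ennreal_mult[symmetric])
      also have "inverse (T j) * (K ^ k * s powr (real k - m) * S j) = s powr (real k - m) * s powr m / 2 ^ (j + 3)"
        using K Sp s by (simp add: T_def field_simps)
      also have "s powr (real k - m) * s powr m = s ^ k"
        using s by (simp add: powr_add[symmetric] powr_realpow)
      finally show ?thesis by simp
    qed
    finally show ?thesis .
  qed
  define B where "B = (\<Union>j. bad j) \<union> (\<Union>j. \<Union>i. Eb k (x j i) (r j i))"
  have B_sets: "B \<in> sets (MM k)" unfolding B_def using bad_sets by measurable
  have "emeasure (MM k) (\<Union>j. bad j) \<le> (\<Sum>j. emeasure (MM k) (bad j))"
    using bad_sets by (intro emeasure_subadditive_countably) auto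
  also have "\<dots> \<le> (\<Sum>j. ennreal (s ^ k / 8 * (1/2) ^ j))"
    using bad_meas by (intro suminf_le) (auto simp: power_add field_simps)
  also have "\<dots> = ennreal (\<Sum>j. s ^ k / 8 * (1/2) ^ j)"
    using s by (intro suminf_ennreal2) (auto intro: summable_mult summable_geometric)
  also have "(\<Sum>j. s ^ k / 8 * (1/2) ^ j) = s ^ k / 4"
    using suminf_mult[of "\<lambda>j. (1/2::real) ^ j" "s ^ k / 8"] suminf_geometric[of "1/2::real"] by simp
  finally have m1: "emeasure (MM k) (\<Union>j. bad j) \<le> ennreal (s ^ k / 4)" .
  have "emeasure (MM k) B \<le> emeasure (MM k) (\<Union>j. bad j) + emeasure (MM k) (\<Union>j. \<Union>i. Eb k (x j i) (r j i))"
  proof -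
    have U1: "(\<Union>j. bad j) \<in> sets (MM k)" using bad_sets by (intro sets.countable_UN) auto
    have U2: "(\<Union>j. \<Union>i. Eb k (x j i) (r j i)) \<in> sets (MM k)" by (intro sets.countable_UN) auto
    show ?thesis unfolding B_def using U1 U2 by (rule emeasure_subadditive)
  qed
  also have "\<dots> \<le> ennreal (s ^ k / 4) + ennreal (s ^ k / 2)" using m1 Eb by (rule add_mono)
  also have "\<dots> = ennreal (s ^ k / 4 + s ^ k / 2)" using s by (subst ennreal_plus) auto
  also have "\<dots> < ennreal (s ^ k)" using s by (simp add: ennreal_less_iff)
  finally have Bm: "emeasure (MM k) B < emeasure (MM k) (Gc k c s)" using Gc_measure[OF s] by simp
  have "\<not> Gc k c s \<subseteq> B"
  proof
    assume "Gc k c s \<subseteq> B"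
    then have "emeasure (MM k) (Gc k c s) \<le> emeasure (MM k) B" using B_sets by (intro emeasure_mono)
    then show False using Bm by simp
  qed
  then obtain q where qG: "q \<in> Gc k c s" and qB: "q \<notin> B" by blast
  define p where "p = (\<lambda>i. if i < k then q i else 0)"
  have pR: "p \<in> Rk k" by (simp add: p_def Rk_def)
  have mid: "\<forall>j<k. \<bar>p j - c j\<bar> \<le> s / 2"
  proof (intro allI impI)
    fix j assume "j < k"
    then have "c j - s / 2 \<le> q j" "q j \<le> c j - s / 2 + s" using qG by (auto simp: Gc_def PiE_iff)
    then show "\<bar>p j - c j\<bar> \<le> s / 2" using \<open>j < k\<close> unfolding p_def abs_le_iff by auto
  qed
  have pC: "p \<in> cube_int k c s" using mid_cube_int[OF s pR mid] .
  have far: "\<forall>i. \<exists>l<k. 2 * r j i < \<bar>p l - x j i l\<bar>" for j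
  proof
    fix i
    have "q \<notin> Eb k (x j i) (r j i)" using qB by (auto simp: B_def)
    moreover have "q \<in> extensional {..<k}" using qG by (auto simp: Gc_def PiE_iff)
    ultimately obtain l where "l < k" "q l \<notin> {x j i l - 2 * r j i .. x j i l + 2 * r j i}"
      by (auto simp: Eb_def PiE_iff)
    then show "\<exists>l<k. 2 * r j i < \<bar>p l - x j i l\<bar>" by (intro exI[of _ l]) (auto simp: p_def abs_if)
  qed
  have pX: "p \<notin> X"
  proof
    assume "p \<in> X"
    then obtain i where "p \<in> linf_cball k (x 0 i) (r 0 i)" using cov by blast
    then have "\<forall>l<k. \<bar>p l - x 0 i l\<bar> \<le> r 0 i" by (simp add: linf_cball_def)
    moreover obtain l where "l < k" "2 * r 0 i < \<bar>p l - x 0 i l\<bar>" using far[of 0] by blast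
    ultimately show False using r0 by force
  qed
  have XR: "X \<subseteq> Rk k" using X by (auto simp: cube_int_def)
  have "HC k m (radproj k c s p ` X) \<le> ennreal (Ck m k * 2 ^ j * S j)" for j
  proof -
    have "HC k m (radproj k c s p ` X) \<le> ennreal ((24 * s) powr m) * FF k m (x j) (r j) p"
      unfolding FF_def
      by (rule proj_HC[OF k s m(1) pR mid XR]) (use far[of j] xR r0 cov in auto)
    also have "FF k m (x j) (r j) p = FF k m (x j) (r j) q"
      unfolding FF_def p_def by simp
    also have "FF k m (x j) (r j) q \<le> ennreal (T j)"
    proof (rule ennreal_inv_mult_lt[OF T0])
      show "\<not> 1 \<le> inverse (ennreal (T j)) * FF k m (x j) (r j) q" using qB qG by (auto simp: B_def bad_def)
    qed
    also have "ennreal ((24 * s) powr m) * ennreal (T j) = ennreal ((24 * s) powr m * T j)"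
      using T0 by (simp add: ennreal_mult)
    also have "(24 * s) powr m * T j = Ck m k * 2 ^ j * S j"
      using s by (simp add: T_def Ck_def K_def al_def powr_mult power_add field_simps)
    finally show ?thesis by (simp add: mult_left_mono)
  qed
  then show ?thesis using pC pX by blast
qed



lemma term_le_suminf: "f i \<le> (\<Sum>i. f i :: ennreal)"
  using sum_le_suminf[of f "{i}"] by auto

lemma get_cover:
  assumes "HC k m A < v"
  shows "\<exists>x r. (\<forall>i. x i \<in> Rk k \<and> 0 \<le> r i) \<and> A \<subseteq> (\<Union>i. linf_cball k (x i) (r i)) \<and> (\<Sum>i. ennreal (r i powr m)) < v"
  using assms unfolding HC_def INF_less_iff by auto

lemma HC_cube: "0 < s \<Longrightarrow> c \<in> Rk k \<Longrightarrow> HC k m (cube k c s) \<le> ennreal (s powr m)"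
proof -
  assume s: "0 < s" and cR: "c \<in> Rk k"
  have "HC k m (cube k c s) \<le> (\<Sum>i. ennreal ((if i = 0 then s else 0) powr m))"
  proof (rule HC_le_cover[where z = "\<lambda>_. c"])
    show "\<forall>i. c \<in> Rk k \<and> 0 \<le> (if i = 0 then s else 0)" using s cR by auto
    show "cube k c s \<subseteq> (\<Union>i. linf_cball k c (if i = 0 then s else 0))"
      by (auto simp: cube_def linf_cball_def intro!: exI[of _ 0])
  qed
  also have "\<dots> = (\<Sum>i\<in>{0}. ennreal ((if i = 0 then s else 0) powr m))"
    by (subst suminf_finite[of "{0}"]) auto
  finally show ?thesis by simp
qed


lemma Eb_cover_bound:
  assumes m: "0 < m" "m < real k" and r0: "\<forall>i. 0 \<le> r i"
    and S: "(\<Sum>i. ennreal (r i powr m)) = ennreal S" "0 \<le> S"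
  shows "emeasure (MM k) (\<Union>i. Eb k (x i) (r i)) \<le> ennreal (4 ^ k * S powr (real k / m))"
proof -
  have k: "0 < k" using m by auto
  have pt: "(4 * r i) ^ k \<le> 4 ^ k * S powr ((real k - m) / m) * r i powr m" for i
  proof (cases "r i = 0")
    case True then show ?thesis using k m S(2) by (simp add: zero_power)
  next
    case False
    then have ri: "0 < r i" using r0 by (simp add: less_le)
    have "ennreal (r i powr m) \<le> ennreal S" using term_le_suminf[of "\<lambda>i. ennreal (r i powr m)" i] S(1) by simp
    then have rS: "r i powr m \<le> S" using S(2) by simp
    have "r i = (r i powr m) powr (1 / m)" using ri m by (simp add: powr_powr)
    also have "\<dots> \<le> S powr (1 / m)" using rS m ri by (intro powr_mono2) auto
    finally have rS': "r i \<le> S powr (1 / m)" .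
    have "r i ^ k = r i powr m * r i powr (real k - m)"
      using ri by (simp add: powr_realpow[symmetric] powr_add[symmetric])
    also have "\<dots> \<le> r i powr m * (S powr (1 / m)) powr (real k - m)"
      using rS' ri m by (intro mult_left_mono powr_mono2) auto
    also have "(S powr (1 / m)) powr (real k - m) = S powr ((real k - m) / m)"
      by (simp add: powr_powr)
    finally have "r i ^ k \<le> r i powr m * S powr ((real k - m) / m)" .
    then show ?thesis by (simp add: power_mult_distrib mult_left_mono mult.commute mult.left_commute)
  qed
  have "emeasure (MM k) (\<Union>i. Eb k (x i) (r i)) \<le> (\<Sum>i. emeasure (MM k) (Eb k (x i) (r i)))"
    by (intro emeasure_subadditive_countably) auto
  also have "\<dots> = (\<Sum>i. ennreal ((4 * r i) ^ k))"
    using r0 by (simp add: Eb_def box_measure)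
  also have "\<dots> \<le> (\<Sum>i. ennreal (4 ^ k * S powr ((real k - m) / m)) * ennreal (r i powr m))"
    using pt S(2) by (intro suminf_le) (auto simp: ennreal_mult[symmetric])
  also have "\<dots> = ennreal (4 ^ k * S powr ((real k - m) / m)) * ennreal S"
    using S(1) by simp
  also have "\<dots> = ennreal (4 ^ k * S powr (real k / m))"
  proof (cases "S = 0")
    case True then show ?thesis using m by simp
  next
    case False
    then have "S powr ((real k - m) / m) * S = S powr (real k / m)"
    proof -
      have "(real k - m) / m = real k / m - 1" using m by (simp add: diff_divide_distrib)
      moreover have "S powr (real k / m - 1) * S = S powr (real k / m)"
        using powr_add[of S "real k / m - 1" 1] S(2) by simp
      ultimately show ?thesis using S(2) False by simp
    qed
    then show ?thesis using S(2) by (simp add: ennreal_mult[symmetric] mult.assoc)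
  qed
  finally show ?thesis .
qed


lemma geo_ennreal: "(\<Sum>j. ennreal (A * (1/2) ^ j)) = ennreal (2 * A)" if "0 \<le> A" for A :: real
proof -
  have "(\<Sum>j. ennreal (A * (1/2) ^ j)) = ennreal (\<Sum>j. A * (1/2) ^ j)"
    using that by (intro suminf_ennreal2) (auto intro: summable_mult summable_geometric)
  also have "(\<Sum>j. A * (1/2) ^ j) = 2 * A"
    using suminf_mult[of "\<lambda>j. (1/2::real) ^ j" A] suminf_geometric[of "1/2::real"] by simp
  finally show ?thesis .
qed

lemma sixteen: "0 < s \<Longrightarrow> 0 < k \<Longrightarrow> 2 * (4 ^ k * (s / 64) ^ k) \<le> (s::real) ^ k / 2"
proof -
  assume s: "0 < s" and k: "0 < k"
  have "4 ^ k * (s / 64) ^ k = (4 * (s / 64)) ^ k" by (rule power_mult_distrib[symmetric])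
  also have "4 * (s / 64) = s / 16" by simp
  finally have e: "4 ^ k * (s / 64) ^ k = s ^ k / 16 ^ k" by (simp add: power_divide)
  have "(16::real) ^ 1 \<le> 16 ^ k" using k by (intro power_increasing) auto
  then have "s ^ k / 16 ^ k \<le> s ^ k / 16" using s by (intro divide_left_mono) auto
  moreover have "0 \<le> s ^ k" using s by simp
  ultimately show ?thesis unfolding e by linarith
qed

lemma sixteen1: "0 < s \<Longrightarrow> 0 < k \<Longrightarrow> 4 ^ k * (s / 64) ^ k \<le> (s::real) ^ k / 2"
proof -
  assume a: "0 < s" "0 < k"
  have "0 \<le> 4 ^ k * (s / 64) ^ k" using a by simp
  then show ?thesis using sixteen[OF a] by linarith
qed


lemma Ck_pos: "0 < m \<Longrightarrow> m < real k \<Longrightarrow> 0 < Ck m k"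
  unfolding Ck_def using Kc_pos[of "m / real k"] by simp

lemma main_k:
  assumes m: "0 < m" "m < real k" and s: "0 < s" and cR: "c \<in> Rk k" and X: "X \<subseteq> cube_int k c s"
    and hX: "HC k m X < ennreal ((1/64) powr m / 2) * HC k m (cube k c s)"
  shows "\<exists>p \<in> cube_int k c s - X. HC k m (radproj k c s p ` X) \<le> ennreal (2 * Ck m k) * HC k m X"
proof -
  have k: "0 < k" using m by auto
  define sg where "sg = (s / 64) powr m"
  have sg0: "0 < sg" using s by (simp add: sg_def)
  have sgk: "sg powr (real k / m) = (s / 64) ^ k"
    using s m by (simp add: sg_def powr_powr powr_realpow)
  have "HC k m X < ennreal ((1/64) powr m / 2) * ennreal (s powr m)"
  proof -
    have "ennreal ((1/64) powr m / 2) * HC k m (cube k c s) \<le> ennreal ((1/64) powr m / 2) * ennreal (s powr m)"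
      using HC_cube[OF s cR, of m] by (rule mult_left_mono) simp
    then show ?thesis using hX by (rule order.strict_trans2[rotated])
  qed
  also have "\<dots> = ennreal (sg / 2)"
    using s by (simp add: ennreal_mult[symmetric] sg_def powr_mult[symmetric])
  finally have hlt: "HC k m X < ennreal (sg / 2)" .
  have Ck0: "0 < Ck m k" by (rule Ck_pos[OF m])
  show ?thesis
  proof (cases "HC k m X = 0")
    case True
    have "\<forall>j. \<exists>xr. (\<forall>i. fst xr i \<in> Rk k \<and> 0 \<le> snd xr i) \<and> X \<subseteq> (\<Union>i. linf_cball k (fst xr i) (snd xr i))
               \<and> (\<Sum>i. ennreal (snd xr i powr m)) < ennreal (sg * (1/4) ^ j)"
    proof
      fix j
      have "HC k m X < ennreal (sg * (1/4) ^ j)" using True sg0 by simp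
      from get_cover[OF this] show "\<exists>xr. (\<forall>i. fst xr i \<in> Rk k \<and> 0 \<le> snd xr i) \<and> X \<subseteq> (\<Union>i. linf_cball k (fst xr i) (snd xr i))
               \<and> (\<Sum>i. ennreal (snd xr i powr m)) < ennreal (sg * (1/4) ^ j)" by auto
    qed
    from choice[OF this] obtain xr where xr: "\<And>j. (\<forall>i. fst (xr j) i \<in> Rk k \<and> 0 \<le> snd (xr j) i)"
      "\<And>j. X \<subseteq> (\<Union>i. linf_cball k (fst (xr j) i) (snd (xr j) i))"
      "\<And>j. (\<Sum>i. ennreal (snd (xr j) i powr m)) < ennreal (sg * (1/4) ^ j)" by blast
    define x where "x j = fst (xr j)" for j
    define r where "r j = snd (xr j)" for j
    define S where "S j = enn2real (\<Sum>i. ennreal (r j i powr m))" for j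
    have Sj: "(\<Sum>i. ennreal (r j i powr m)) = ennreal (S j)" "0 \<le> S j" "S j < sg * (1/4) ^ j" for j
    proof -
      have lt: "(\<Sum>i. ennreal (r j i powr m)) < ennreal (sg * (1/4) ^ j)" using xr(3) by (simp add: r_def)
      then have "(\<Sum>i. ennreal (r j i powr m)) < top" using less_trans ennreal_less_top by blast
      then show e: "(\<Sum>i. ennreal (r j i powr m)) = ennreal (S j)" unfolding S_def by simp
      show "0 \<le> S j" by (simp add: S_def)
      show "S j < sg * (1/4) ^ j" using lt e \<open>0 \<le> S j\<close> sg0 by (simp add: ennreal_less_iff)
    qed
    have Eb: "emeasure (MM k) (\<Union>j. \<Union>i. Eb k (x j i) (r j i)) \<le> ennreal (s ^ k / 2)"
    proof -
      have "emeasure (MM k) (\<Union>j. \<Union>i. Eb k (x j i) (r j i)) \<le> (\<Sum>j. emeasure (MM k) (\<Union>i. Eb k (x j i) (r j i)))"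
        by (intro emeasure_subadditive_countably) (auto intro: sets.countable_UN)
      also have "\<dots> \<le> (\<Sum>j. ennreal ((4 ^ k * (s / 64) ^ k) * (1/2) ^ j))"
      proof (rule suminf_le)
        fix j
        have "emeasure (MM k) (\<Union>i. Eb k (x j i) (r j i)) \<le> ennreal (4 ^ k * S j powr (real k / m))"
          by (rule Eb_cover_bound[OF m _ Sj(1,2)]) (use xr(1) in \<open>auto simp: r_def\<close>)
        moreover have "S j powr (real k / m) \<le> (s / 64) ^ k * (1/2) ^ j"
        proof -
          have "S j powr (real k / m) \<le> (sg * (1/4) ^ j) powr (real k / m)"
            using Sj(2,3)[of j] m by (intro powr_mono2) auto
          also have "(sg * (1/4) ^ j) powr (real k / m) = (s / 64) ^ k * ((1/4) ^ j) powr (real k / m)"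
            using sg0 by (simp add: powr_mult sgk)
          also have "((1/4::real) ^ j) powr (real k / m) \<le> (1/4) ^ j"
            using m by (intro powr_le_one_le) (auto simp: power_le_one)
          also have "(1/4::real) ^ j \<le> (1/2) ^ j" by (intro power_mono) auto
          finally show ?thesis using s by (simp add: mult_left_mono)
        qed
        ultimately show "emeasure (MM k) (\<Union>i. Eb k (x j i) (r j i)) \<le> ennreal ((4 ^ k * (s / 64) ^ k) * (1/2) ^ j)"
        proof -
          assume a1: "emeasure (MM k) (\<Union>i. Eb k (x j i) (r j i)) \<le> ennreal (4 ^ k * S j powr (real k / m))"
            and a2: "S j powr (real k / m) \<le> (s / 64) ^ k * (1/2) ^ j"
          have "4 ^ k * S j powr (real k / m) \<le> 4 ^ k * ((s / 64) ^ k * (1/2) ^ j)"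
            using a2 by (rule mult_left_mono) simp
          then have "ennreal (4 ^ k * S j powr (real k / m)) \<le> ennreal ((4 ^ k * (s / 64) ^ k) * (1/2) ^ j)"
            by (simp add: mult.assoc ennreal_leI)
          then show ?thesis using a1 by (rule order_trans[rotated])
        qed
      qed auto
      also have "\<dots> = ennreal (2 * (4 ^ k * (s / 64) ^ k))" using s by (intro geo_ennreal) simp
      also have "\<dots> \<le> ennreal (s ^ k / 2)" using sixteen[OF s k] by (rule ennreal_leI)
      finally show ?thesis .
    qed
    obtain p where p: "p \<in> cube_int k c s - X" and hp: "\<And>j. HC k m (radproj k c s p ` X) \<le> ennreal (Ck m k * 2 ^ j * S j)"
    proof -
      have a1: "\<forall>j i. x j i \<in> Rk k" "\<forall>j i. 0 \<le> r j i" using xr(1) by (auto simp: x_def r_def)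
      have a2: "\<forall>j. X \<subseteq> (\<Union>i. linf_cball k (x j i) (r j i))" using xr(2) by (auto simp: x_def r_def)
      have a3: "\<forall>j. (\<Sum>i. ennreal (r j i powr m)) = ennreal (S j)" "\<forall>j. 0 \<le> S j" using Sj(1,2) by auto
      show ?thesis using core[OF m s cR X a1 a2 a3 Eb] that by blast
    qed
    have "HC k m (radproj k c s p ` X) \<le> 0"
    proof -
      have b: "HC k m (radproj k c s p ` X) \<le> ennreal (Ck m k * sg * (1/2) ^ j)" for j
      proof -
        have "Ck m k * 2 ^ j * S j \<le> Ck m k * 2 ^ j * (sg * (1/4) ^ j)"
          using Sj(3)[of j] Ck0 by (intro mult_left_mono) auto
        also have "\<dots> = Ck m k * sg * (2 ^ j * (1/4) ^ j)" by simp
        also have "2 ^ j * (1/4::real) ^ j = (1/2) ^ j" by (simp add: power_mult_distrib[symmetric])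
        finally show ?thesis using hp[of j] by (meson ennreal_leI order_trans)
      qed
      then have "HC k m (radproj k c s p ` X) < top" using ennreal_less_top le_less_trans by blast
      then obtain y where y: "HC k m (radproj k c s p ` X) = ennreal y" "0 \<le> y" by (cases "HC k m (radproj k c s p ` X)") auto
      have "y \<le> Ck m k * sg * (1/2) ^ j" for j using b[of j] y Ck0 sg0 by simp
      then have "y \<le> 0"
      proof -
        assume yb: "\<And>j. y \<le> Ck m k * sg * (1/2) ^ j"
        have "(\<lambda>j. Ck m k * sg * (1/2::real) ^ j) \<longlonglongrightarrow> Ck m k * sg * 0"
          by (intro tendsto_mult tendsto_const LIMSEQ_power_zero) auto
        then show "y \<le> 0" using yb by (simp add: LIMSEQ_le_const)
      qed
      then show ?thesis using y by simp
    qed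
    then show ?thesis using p by (intro bexI[of _ p]) auto
  next
    case False
    then have hpos: "0 < HC k m X" by (simp add: zero_less_iff_neq_zero)
    obtain h where h: "HC k m X = ennreal h" "0 \<le> h" using hlt by (cases "HC k m X") auto
    have h0: "0 < h" using hpos h by simp
    have "HC k m X < ennreal (2 * h)" unfolding h(1) by (rule ennreal_lessI) (use h0 in auto)
    from get_cover[OF this] obtain x0 r0 where c0: "\<forall>i. x0 i \<in> Rk k \<and> 0 \<le> r0 i" "X \<subseteq> (\<Union>i. linf_cball k (x0 i) (r0 i))"
       "(\<Sum>i. ennreal (r0 i powr m)) < ennreal (2 * h)" by blast
    define S where "S = enn2real (\<Sum>i. ennreal (r0 i powr m))"
    have "(\<Sum>i. ennreal (r0 i powr m)) < top" using c0(3) by (rule less_trans) simp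
    then have S1: "(\<Sum>i. ennreal (r0 i powr m)) = ennreal S" unfolding S_def by simp
    have S0: "0 \<le> S" by (simp add: S_def)
    have "ennreal S < ennreal (2 * h)" using c0(3) unfolding S1 .
    then have S2: "S < 2 * h" using ennreal_less_iff[OF S0] by blast
    have "ennreal h < ennreal (sg / 2)" using hlt unfolding h(1) .
    then have hsg: "h < sg / 2" using ennreal_less_iff[OF h(2)] by blast
    have Eb: "emeasure (MM k) (\<Union>j::nat. \<Union>i. Eb k (x0 i) (r0 i)) \<le> ennreal (s ^ k / 2)"
    proof -
      have "emeasure (MM k) (\<Union>j::nat. \<Union>i. Eb k (x0 i) (r0 i)) = emeasure (MM k) (\<Union>i. Eb k (x0 i) (r0 i))" by simp
      also have "\<dots> \<le> ennreal (4 ^ k * S powr (real k / m))"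
        by (rule Eb_cover_bound[OF m _ S1 S0]) (use c0(1) in auto)
      also have "S powr (real k / m) \<le> sg powr (real k / m)"
        using S0 S2 hsg m by (intro powr_mono2) auto
      also have "4 ^ k * sg powr (real k / m) \<le> s ^ k / 2" unfolding sgk by (rule sixteen1[OF s k])
      finally show ?thesis by (simp add: ennreal_leI)
    qed
    obtain p where p: "p \<in> cube_int k c s - X" and hp: "\<And>j::nat. HC k m (radproj k c s p ` X) \<le> ennreal (Ck m k * 2 ^ j * S)"
    proof -
      have a1: "\<forall>j::nat. \<forall>i. x0 i \<in> Rk k" "\<forall>j::nat. \<forall>i. 0 \<le> r0 i" using c0(1) by auto
      have a2: "\<forall>j::nat. X \<subseteq> (\<Union>i. linf_cball k (x0 i) (r0 i))" using c0(2) by auto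
      have a3: "\<forall>j::nat. (\<Sum>i. ennreal (r0 i powr m)) = ennreal S" "\<forall>j::nat. 0 \<le> S" using S1 S0 by auto
      show ?thesis using core[OF m s cR X a1 a2 a3 Eb] that by blast
    qed
    have "HC k m (radproj k c s p ` X) \<le> ennreal (Ck m k * S)" using hp[of 0] by simp
    also have "\<dots> \<le> ennreal (2 * Ck m k * h)" using S2 Ck0 by (intro ennreal_leI) auto
    also have "\<dots> = ennreal (2 * Ck m k) * HC k m X" using h Ck0 by (simp add: ennreal_mult)
    finally show ?thesis using p by auto
  qed
qed


theorem lemma3p5:
  fixes m :: real and n :: nat
  assumes "m > 0" and "real n \<ge> m"
  shows "\<exists>Cscale Cmax. Cscale > 0 \<and> Cmax > 0 \<and>
    (\<forall>k::nat. \<forall>c s X. m < real k \<and> k \<le> n \<and> c \<in> Rk k \<and> s > 0 \<and>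
       X \<subseteq> cube_int k c s \<and> HC k m X < ennreal Cmax * HC k m (cube k c s) \<longrightarrow>
       (\<exists>p \<in> cube_int k c s - X.
          HC k m (radproj k c s p ` X) \<le> ennreal Cscale * HC k m X))"
proof (intro exI conjI allI impI)
  define Cs where "Cs = 2 * (\<Sum>k\<in>{..n}. \<bar>Ck m k\<bar>) + 1"
  show "0 < Cs" unfolding Cs_def by (simp add: add_nonneg_pos sum_nonneg)
  show "0 < (1/64) powr m / 2" by simp
  fix k c s X
  assume H: "m < real k \<and> k \<le> n \<and> c \<in> Rk k \<and> s > 0 \<and>
       X \<subseteq> cube_int k c s \<and> HC k m X < ennreal ((1/64) powr m / 2) * HC k m (cube k c s)"
  then obtain p where p: "p \<in> cube_int k c s - X" "HC k m (radproj k c s p ` X) \<le> ennreal (2 * Ck m k) * HC k m X"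
    using main_k[of m k s c X] assms(1) by blast
  have "Ck m k \<le> (\<Sum>k\<in>{..n}. \<bar>Ck m k\<bar>)"
    using H member_le_sum[of k "{..n}" "\<lambda>k. \<bar>Ck m k\<bar>"] by auto
  then have "2 * Ck m k \<le> Cs" unfolding Cs_def by linarith
  then have "ennreal (2 * Ck m k) * HC k m X \<le> ennreal Cs * HC k m X"
    by (intro mult_right_mono ennreal_leI) auto
  then show "\<exists>p \<in> cube_int k c s - X. HC k m (radproj k c s p ` X) \<le> ennreal Cs * HC k m X"
    using p by (intro bexI[of _ p]) auto
qed

end
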